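(* For $k\ge4$ let $$E_k(n)=\frac{\gamma_k}{(1-\tau_k)^2}\,\rho_k^{-n}\,n^{-3/2},\qquad\text{where }\ \gamma_k=\sqrt{\frac{\rho_k}{2\pi\Lambda_k''(\tau_k)}}.$$ By Theorem 4.1, $E_k(n)$ is the asymptotic equivalent of $P^{(k)}_n$ as $n\to\infty$ for each fixed $k$. There exist a constant $C>0$ and an integer $K$ such that for all $k\ge K$ and all $n\ge1$, $$E_k(n)\le\frac{1}{(1-\frac{e}{k})^2}\sqrt{\frac{e}{4\pi k}}\left(\frac{k}{e}\right)^n\left(1+\frac52\frac{\log k}{k}+\frac{C}{k}\right)^n n^{-3/2}.$$
   Context: Let $s_j$ be the number of simple permutations of size $j$. A permutation is simple if its only intervals (factors whose value set is a set of consecutive integers) are the singletons and the whole permutation, with the convention that the permutations of sizes $1$ and $2$ are not simple. For $k\ge4$, let $$\Lambda_k(x)=\frac{x^2}{1-x}+\sum_{j=4}^k s_j\left(\frac{x}{1-x}\right)^j\qquad(0\le x<1).$$ Let $\tau_k$ be the unique solution in $(0,1)$ of $\Lambda_k'(x)=1$, and set $\rho_k=\tau_k-\Lambda_k(\tau_k)$. Let $U^{(k)}(z)$ be the formal power series with $U^{(k)}(0)=0$ and $U^{(k)}=z+\Lambda_k(U^{(k)})$, and let $P^{(k)}_n=[z^n]\dfrac{U^{(k)}(z)}{1-U^{(k)}(z)}$. Combinatorially, $P^{(k)}_n$ is the number of permutations of size $n$ whose strong interval tree has no prime node of arity larger than $k$. *)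

theory Defs
  imports "HOL-Analysis.Analysis" "HOL-Combinatorics.Permutations"
begin

text \<open>A permutation of size n is a bijection p of {0..<n} (positions to values),
  fixing everything outside.\<close>

definition perm_interval :: "nat \<Rightarrow> (nat \<Rightarrow> nat) \<Rightarrow> nat \<Rightarrow> nat \<Rightarrow> bool" where
  "perm_interval n p i j \<longleftrightarrow> i \<le> j \<and> j < n \<and> (\<exists>a. p ` {i..j} = {a..a + (j - i)})"

text \<open>Simple permutations: only trivial intervals; sizes 0, 1, 2 are excluded by convention.\<close>
definition simple_perm :: "nat \<Rightarrow> (nat \<Rightarrow> nat) \<Rightarrow> bool" where
  "simple_perm n p \<longleftrightarrow> n \<ge> 3 \<and> p permutes {0..<n} \<and>
     (\<forall>i j. perm_interval n p i j \<longrightarrow> i = j \<or> (i = 0 \<and> j = n - 1))"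

definition num_simple :: "nat \<Rightarrow> nat" where
  "num_simple n = card {p. simple_perm n p}"

definition Lambda :: "nat \<Rightarrow> real \<Rightarrow> real" where
  "Lambda k x = x\<^sup>2 / (1 - x) + (\<Sum>j=4..k. real (num_simple j) * (x / (1 - x)) ^ j)"

definition tau :: "nat \<Rightarrow> real" where
  "tau k = (THE x. 0 < x \<and> x < 1 \<and> deriv (Lambda k) x = 1)"

definition rho :: "nat \<Rightarrow> real" where
  "rho k = tau k - Lambda k (tau k)"

definition gamma_k :: "nat \<Rightarrow> real" where
  "gamma_k k = sqrt (rho k / (2 * pi * deriv (deriv (Lambda k)) (tau k)))"

definition E :: "nat \<Rightarrow> nat \<Rightarrow> real" where
  "E k n = gamma_k k / (1 - tau k)\<^sup>2 * rho k powr (- real n) * real n powr (-3/2)"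

end

theory Submission
  imports Defs "HOL-Real_Asymp.Real_Asymp" "HOL-Analysis.Harmonic_Numbers"
begin


definition yy :: "real \<Rightarrow> real" where "yy x = x/(1-x)"

definition L1 :: "nat \<Rightarrow> real \<Rightarrow> real" where
 "L1 k x = (2*x - x^2)/(1-x)^2 + (\<Sum>j=4..k. real (num_simple j) * (real j * yy x ^ (j-1) * (1/(1-x)^2)))"

definition L2 :: "nat \<Rightarrow> real \<Rightarrow> real" where
 "L2 k x = 2/(1-x)^3 + (\<Sum>j=4..k. real (num_simple j) * (real j * (real (j-1) * yy x ^ (j-2) * (1/(1-x)^2) * (1/(1-x)^2) + yy x ^ (j-1) * (2/(1-x)^3))))"

lemma aux1: "(x::real) \<noteq> 1 \<Longrightarrow> 1/(1-x)^2 - 1 = (2*x - x^2)/(1-x)^2"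
proof -
  assume "x \<noteq> 1"
  then have a: "(1-x)^2 \<noteq> 0" by auto
  have "1/(1-x)^2 - 1 = (1 - (1-x)^2)/(1-x)^2" using a by (simp add: diff_divide_distrib)
  also have "1 - (1-x)^2 = 2*x - x^2" by (simp add: power2_eq_square algebra_simps)
  finally show ?thesis .
qed

lemma yy_deriv: "x \<noteq> 1 \<Longrightarrow> (yy has_real_derivative 1/(1-x)^2) (at x)"
  unfolding yy_def
  by (auto intro!: derivative_eq_intros simp: field_simps power2_eq_square)

lemma Lambda_alt: "Lambda k x = x^2/(1-x) + (\<Sum>j=4..k. real (num_simple j) * yy x ^ j)"
  by (simp add: Lambda_def yy_def)

lemma d_Lambda: assumes "x < 1" shows "(Lambda k has_real_derivative L1 k x) (at x)"
proof -
  have e: "Lambda k = (\<lambda>x. x^2/(1-x) + (\<Sum>j=4..k. real (num_simple j) * yy x ^ j))"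
    by (rule ext) (simp add: Lambda_alt)
  have d1: "((\<lambda>x. x^2/(1-x)) has_real_derivative (2*x - x^2)/(1-x)^2) (at x)"
  proof (rule has_field_derivative_transform_within_open[of "\<lambda>x. 1/(1-x) - 1 - x" _ _ "{..<1}"])
    have "((\<lambda>x. 1/(1-x) - 1 - x) has_real_derivative 1/(1-x)^2 - 0 - 1) (at x)"
      using assms by (auto intro!: derivative_eq_intros simp: field_simps power2_eq_square)
    moreover have "1/(1-x)^2 - 0 - 1 = (2*x - x^2)/(1-x)^2"
      using assms by (simp add: aux1)
    ultimately show "((\<lambda>x. 1/(1-x) - 1 - x) has_real_derivative (2*x - x^2)/(1-x)^2) (at x)" by simp
  next
    fix z :: real assume "z \<in> {..<1}"
    then have "1 - z \<noteq> 0" by simp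
    then show "1/(1-z) - 1 - z = z^2/(1-z)"
      by (simp add: field_simps power2_eq_square)
  qed (use assms in auto)
  have d2: "((\<lambda>x. real (num_simple j) * yy x ^ j) has_real_derivative
      real (num_simple j) * (real j * yy x ^ (j-1) * (1/(1-x)^2))) (at x)" for j
    using assms by (auto intro!: derivative_eq_intros yy_deriv)
  show ?thesis unfolding e L1_def
    by (intro DERIV_add d1 DERIV_sum d2)
qed

lemma d_L1: assumes "x < 1" shows "(L1 k has_real_derivative L2 k x) (at x)"
proof -
  have e: "L1 k = (\<lambda>x. (2*x - x^2)/(1-x)^2 + (\<Sum>j=4..k. real (num_simple j) * (real j * yy x ^ (j-1) * (1/(1-x)^2))))"
    by (rule ext) (simp add: L1_def)
  have d0: "((\<lambda>x. 1/(1-x)) has_real_derivative 1/(1-x)^2) (at x)"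
    using assms by (auto intro!: derivative_eq_intros simp: field_simps power2_eq_square)
  have "((\<lambda>x. (1/(1-x))^2) has_real_derivative of_nat 2 * (1/(1-x)^2 * (1/(1-x))^(2 - Suc 0))) (at x)"
    by (rule DERIV_power[OF d0])
  then have d3: "((\<lambda>x. 1/(1-x)^2) has_real_derivative 2/(1-x)^3) (at x)"
    by (simp add: power_one_over power3_eq_cube power2_eq_square)
  have d1: "((\<lambda>x. (2*x - x^2)/(1-x)^2) has_real_derivative 2/(1-x)^3) (at x)"
  proof (rule has_field_derivative_transform_within_open[of "\<lambda>x. 1/(1-x)^2 - 1" _ _ "{..<1}"])
    show "((\<lambda>x. 1/(1-x)^2 - 1) has_real_derivative 2/(1-x)^3) (at x)"
      using DERIV_diff[OF d3 DERIV_const[of 1]] by simp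
  next
    fix z :: real assume "z \<in> {..<1}"
    then have "1 - z \<noteq> 0" by simp
    then show "1/(1-z)^2 - 1 = (2*z - z^2)/(1-z)^2"
      by (simp add: aux1)
  qed (use assms in auto)
  have d2: "((\<lambda>x. real (num_simple j) * (real j * yy x ^ (j-1) * (1/(1-x)^2))) has_real_derivative
      real (num_simple j) * (real j * (real (j-1) * yy x ^ (j-2) * (1/(1-x)^2) * (1/(1-x)^2) + yy x ^ (j-1) * (2/(1-x)^3)))) (at x)" for j
  proof -
    have A: "((\<lambda>x. yy x ^ (j-1)) has_real_derivative of_nat (j-1) * (1/(1-x)^2 * yy x ^ (j-1 - Suc 0))) (at x)"
      using assms by (intro DERIV_power yy_deriv) auto
    have B: "((\<lambda>x. yy x ^ (j-1) * (1/(1-x)^2)) has_real_derivative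
       of_nat (j-1) * (1/(1-x)^2 * yy x ^ (j-1 - Suc 0)) * (1/(1-x)^2) + 2/(1-x)^3 * yy x ^ (j-1)) (at x)"
      by (rule DERIV_mult[OF A d3])
    have eq: "of_nat (j-1) * (1/(1-x)^2 * yy x ^ (j-1 - Suc 0)) * (1/(1-x)^2) + 2/(1-x)^3 * yy x ^ (j-1)
      = real (j-1) * yy x ^ (j-2) * (1/(1-x)^2) * (1/(1-x)^2) + yy x ^ (j-1) * (2/(1-x)^3)"
      by (simp add: diff_diff_left numeral_2_eq_2)
    have "((\<lambda>x. yy x ^ (j-1) * (1/(1-x)^2)) has_real_derivative
       real (j-1) * yy x ^ (j-2) * (1/(1-x)^2) * (1/(1-x)^2) + yy x ^ (j-1) * (2/(1-x)^3)) (at x)"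
      using B unfolding eq .
    from DERIV_cmult[OF DERIV_cmult[OF this, of "real j"], of "real (num_simple j)"]
    show ?thesis by (simp add: mult.assoc)
  qed
  show ?thesis unfolding e L2_def
    by (intro DERIV_add d1 DERIV_sum d2)
qed

lemma ln_stir: "m > 0 \<Longrightarrow> ln (exp 1 * sqrt m * (m / exp 1) ^ p) = 1 + ln m/2 + p * (ln m - 1)"
  by (simp add: ln_mult ln_div ln_realpow ln_sqrt)

lemma fact_stirling: "n \<ge> 1 \<Longrightarrow> fact n \<le> exp 1 * sqrt (real n) * (real n / exp 1) ^ n"
proof (induction n rule: dec_induct)
  case base then show ?case by simp
next
  case (step n)
  have n: "real n \<ge> 1" using step by simp
  have key: "ln (real n + 1) - ln (real n) \<ge> 2 * ((real n + 1) - real n) / (real n + (real n + 1))"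
    by (rule ln_inverse_approx_ge) (use n in auto)
  have "(real n + 1/2) * (ln (real n + 1) - ln (real n)) \<ge> 1"
  proof -
    have "(real n + 1/2) * (2 * ((real n + 1) - real n) / (real n + (real n + 1))) = 1"
      using n by (simp add: field_simps)
    moreover have "(real n + 1/2) * (2 * ((real n + 1) - real n) / (real n + (real n + 1))) \<le> (real n + 1/2) * (ln (real n + 1) - ln (real n))"
      by (rule mult_left_mono[OF key]) (use n in auto)
    ultimately show ?thesis by linarith
  qed
  have "ln (fact (Suc n)) = ln (fact n) + ln (real n + 1)"
    by (simp add: ln_mult add.commute)
  also have "ln (fact n) \<le> ln (exp 1 * sqrt (real n) * (real n / exp 1) ^ n)"
    using step.IH n by (subst ln_le_cancel_iff) auto
  also have "ln (exp 1 * sqrt (real n) * (real n / exp 1) ^ n) = 1 + ln (real n)/2 + n * (ln (real n) - 1)"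
    using n by (intro ln_stir) auto
  finally have "ln (fact (Suc n)) \<le> 1 + ln (real n)/2 + n * (ln (real n) - 1) + ln (real n + 1)" by simp
  also have "\<dots> \<le> 1 + ln (real n + 1)/2 + (n+1) * (ln (real n + 1) - 1)"
    using \<open>(real n + 1/2) * _ \<ge> 1\<close> by (simp add: algebra_simps)
  also have "\<dots> = ln (exp 1 * sqrt (real (Suc n)) * (real (Suc n) / exp 1) ^ Suc n)"
    using ln_stir[of "real (Suc n)" "Suc n"] by (simp add: add.commute)
  finally show ?case by (subst (asm) ln_le_cancel_iff) auto
qed

lemma num_simple_le: "real (num_simple j) \<le> fact j"
proof -
  have "{p. simple_perm j p} \<subseteq> {p. p permutes {0..<j}}" by (auto simp: simple_perm_def)
  then have "card {p. simple_perm j p} \<le> card {p. p permutes {0..<j}}"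
    by (intro card_mono finite_permutations) auto
  also have "\<dots> = fact j" by (rule card_permutations) auto
  finally show ?thesis unfolding num_simple_def by (metis of_nat_fact of_nat_le_iff)
qed



lemma yy_nonneg: "0 \<le> x \<Longrightarrow> x < 1 \<Longrightarrow> 0 \<le> yy x"
  by (simp add: yy_def)

lemma yy_mono: "0 \<le> a \<Longrightarrow> a \<le> b \<Longrightarrow> b < 1 \<Longrightarrow> yy a \<le> yy b"
  unfolding yy_def by (rule frac_le) auto

lemma inv2_mono: "0 \<le> a \<Longrightarrow> a \<le> b \<Longrightarrow> b < 1 \<Longrightarrow> 1/(1-a)^2 \<le> 1/(1-(b::real))^2"
  by (intro divide_left_mono power_mono) auto

lemma inv2_strict: "0 \<le> a \<Longrightarrow> a < b \<Longrightarrow> b < 1 \<Longrightarrow> 1/(1-a)^2 < 1/(1-(b::real))^2"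
  by (intro divide_strict_left_mono power_strict_mono) auto

lemma L1_term_mono: "0 \<le> a \<Longrightarrow> a \<le> b \<Longrightarrow> b < 1 \<Longrightarrow>
   real (num_simple j) * (real j * yy a ^ (j-1) * (1/(1-a)^2)) \<le> real (num_simple j) * (real j * yy b ^ (j-1) * (1/(1-b)^2))"
  by (intro mult_left_mono mult_mono power_mono yy_mono inv2_mono yy_nonneg mult_nonneg_nonneg zero_le_power) auto

lemma L1_term_nonneg: "0 \<le> a \<Longrightarrow> a < 1 \<Longrightarrow> 0 \<le> real (num_simple j) * (real j * yy a ^ (j-1) * (1/(1-a)^2))"
  by (intro mult_nonneg_nonneg yy_nonneg zero_le_power) auto

lemma L1_strict: assumes "0 \<le> a" "a < b" "b < 1" shows "L1 k a < L1 k b"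
proof -
  have "(2*a - a^2)/(1-a)^2 < (2*b - b^2)/(1-b)^2"
    using inv2_strict[OF assms] aux1[of a] aux1[of b] assms by simp
  moreover have "(\<Sum>j=4..k. real (num_simple j) * (real j * yy a ^ (j-1) * (1/(1-a)^2)))
     \<le> (\<Sum>j=4..k. real (num_simple j) * (real j * yy b ^ (j-1) * (1/(1-b)^2)))"
    by (intro sum_mono L1_term_mono) (use assms in auto)
  ultimately show ?thesis unfolding L1_def by linarith
qed

lemma L1_mono: "0 \<le> a \<Longrightarrow> a \<le> b \<Longrightarrow> b < 1 \<Longrightarrow> L1 k a \<le> L1 k b"
  using L1_strict[of a b k] by (cases "a = b") auto

lemma L1_zero: "k \<ge> 4 \<Longrightarrow> L1 k 0 = 0"
proof -
  have "(\<Sum>j=4..k. real (num_simple j) * (real j * yy 0 ^ (j-1) * (1/(1-0)^2))) = 0"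
    by (intro sum.neutral) (auto simp: yy_def)
  then show ?thesis unfolding L1_def by simp
qed

lemma L1_half: "L1 k (1/2) \<ge> 3"
proof -
  have "(\<Sum>j=4..k. real (num_simple j) * (real j * yy (1/2) ^ (j-1) * (1/(1-1/2)^2))) \<ge> 0"
    by (intro sum_nonneg L1_term_nonneg) auto
  then show ?thesis unfolding L1_def by (simp add: power2_eq_square)
qed

lemma L2_pos: assumes "0 \<le> x" "x < 1" shows "L2 k x > 0"
proof -
  have "(\<Sum>j=4..k. real (num_simple j) * (real j * (real (j-1) * yy x ^ (j-2) * (1/(1-x)^2) * (1/(1-x)^2) + yy x ^ (j-1) * (2/(1-x)^3)))) \<ge> 0"
    using assms by (intro sum_nonneg mult_nonneg_nonneg add_nonneg_nonneg yy_nonneg zero_le_power) auto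
  moreover have "2/(1-x)^3 > 0" using assms by simp
  ultimately show ?thesis unfolding L2_def by linarith
qed

lemma le_mul1: "0 \<le> a \<Longrightarrow> 1 \<le> c \<Longrightarrow> a \<le> a * (c::real)"
  using mult_left_mono[of 1 c a] by simp

lemma L1_le_xL2: assumes "0 \<le> x" "x < 1" shows "L1 k x \<le> x * L2 k x"
proof -
  have ax: "1 - x > 0" using assms by simp
  have t1: "(2*x - x^2)/(1-x)^2 \<le> x * (2/(1-x)^3)"
  proof -
    have h: "x*x*(x-3) \<le> 0" using assms by (intro mult_nonneg_nonpos) auto
    have eq: "(2*x - x^2)*(1-x) = 2*x + x*x*(x-3)" by (simp add: power2_eq_square algebra_simps)
    have "(2*x - x^2)*(1-x) \<le> 2*x" using h eq by linarith
    then have "(2*x - x^2)*(1-x) / (1-x)^3 \<le> 2*x/(1-x)^3" using ax by (intro divide_right_mono) auto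
    moreover have "(2*x - x^2)*(1-x) / (1-x)^3 = (2*x - x^2)/(1-x)^2" using ax by (simp add: power3_eq_cube power2_eq_square)
    moreover have "x * (2/(1-x)^3) = 2*x/(1-x)^3" by simp
    ultimately show ?thesis by linarith
  qed
  have t2: "real (num_simple j) * (real j * yy x ^ (j-1) * (1/(1-x)^2)) \<le>
     x * (real (num_simple j) * (real j * (real (j-1) * yy x ^ (j-2) * (1/(1-x)^2) * (1/(1-x)^2) + yy x ^ (j-1) * (2/(1-x)^3))))"
    if j: "j \<in> {4..k}" for j
  proof -
    have j1: "j - 1 = Suc (j - 2)" using j by auto
    have pw: "yy x ^ (j-1) = yy x * yy x ^ (j-2)" by (simp only: j1 power_Suc)
    have yq: "x * (1/(1-x)) = yy x" by (simp add: yy_def)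
    have e0: "\<And>Y q::real. x * (Y * q^2 * q^2) = (x*q*Y) * q^2 * q" by (simp add: power2_eq_square mult_ac)
    have "x * (yy x ^ (j-2) * (1/(1-x)^2) * (1/(1-x)^2)) = x * (yy x ^ (j-2) * (1/(1-x))^2 * (1/(1-x))^2)"
      by (simp add: power_one_over)
    also have "\<dots> = (x * (1/(1-x)) * yy x ^ (j-2)) * (1/(1-x))^2 * (1/(1-x))" by (rule e0)
    also have "\<dots> = yy x ^ (j-1) * (1/(1-x)^2) * (1/(1-x))" unfolding yq pw by (simp add: power_one_over)
    finally have e: "x * (yy x ^ (j-2) * (1/(1-x)^2) * (1/(1-x)^2)) = yy x ^ (j-1) * (1/(1-x)^2) * (1/(1-x))" .
    have "yy x ^ (j-1) * (1/(1-x)^2) \<le> yy x ^ (j-1) * (1/(1-x)^2) * (1/(1-x))"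
      using assms ax yy_nonneg[of x] by (intro le_mul1) auto
    also have "\<dots> \<le> (yy x ^ (j-1) * (1/(1-x)^2) * (1/(1-x))) * real (j-1)"
      using j assms by (intro le_mul1 mult_nonneg_nonneg yy_nonneg zero_le_power) auto
    also have "\<dots> = x * (real (j-1) * yy x ^ (j-2) * (1/(1-x)^2) * (1/(1-x)^2))"
      unfolding e[symmetric] by (simp only: mult_ac)
    also have "\<dots> \<le> x * (real (j-1) * yy x ^ (j-2) * (1/(1-x)^2) * (1/(1-x)^2) + yy x ^ (j-1) * (2/(1-x)^3))"
      using assms ax yy_nonneg[of x] by (intro mult_left_mono) auto
    finally have "yy x ^ (j-1) * (1/(1-x)^2) \<le> x * (real (j-1) * yy x ^ (j-2) * (1/(1-x)^2) * (1/(1-x)^2) + yy x ^ (j-1) * (2/(1-x)^3))" .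
    then have "real (num_simple j) * (real j * (yy x ^ (j-1) * (1/(1-x)^2))) \<le> real (num_simple j) * (real j * (x * (real (j-1) * yy x ^ (j-2) * (1/(1-x)^2) * (1/(1-x)^2) + yy x ^ (j-1) * (2/(1-x)^3))))"
      by (intro mult_left_mono) auto
    then show ?thesis by (simp add: ac_simps)
  qed
  have "L1 k x \<le> x * (2/(1-x)^3) + (\<Sum>j=4..k. x * (real (num_simple j) * (real j * (real (j-1) * yy x ^ (j-2) * (1/(1-x)^2) * (1/(1-x)^2) + yy x ^ (j-1) * (2/(1-x)^3)))))"
    unfolding L1_def using t1 by (intro add_mono sum_mono t2) auto
  also have "\<dots> = x * L2 k x" unfolding L2_def by (simp add: sum_distrib_left distrib_left)
  finally show ?thesis .
qed


lemma Lambda_le_xL1: assumes "0 \<le> x" "x < 1" shows "2 * Lambda k x \<le> x * L1 k x"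
proof -
  have ax: "1 - x > 0" using assms by simp
  have t1: "2 * (x^2/(1-x)) \<le> x * ((2*x - x^2)/(1-x)^2)"
  proof -
    have "2 * (x^2/(1-x)) = 2*x^2*(1-x)/(1-x)^2" using ax by (simp add: power2_eq_square)
    also have "\<dots> \<le> x*(2*x - x^2)/(1-x)^2"
    proof (rule divide_right_mono)
      have "x*x*x \<ge> 0" using assms by simp
      then show "2*x^2*(1-x) \<le> x*(2*x - x^2)" by (simp add: power2_eq_square algebra_simps)
    qed simp
    finally show ?thesis by simp
  qed
  have t2: "2 * (real (num_simple j) * yy x ^ j) \<le> x * (real (num_simple j) * (real j * yy x ^ (j-1) * (1/(1-x)^2)))"
    if j: "j \<in> {4..k}" for j
  proof -
    have pw: "yy x ^ j = yy x * yy x ^ (j-1)" using j by (cases j) auto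
    have yq: "x * (1/(1-x)^2) = yy x * (1/(1-x))" by (simp add: yy_def power2_eq_square)
    have "x * (real j * yy x ^ (j-1) * (1/(1-x)^2)) = real j * yy x ^ (j-1) * (x * (1/(1-x)^2))"
      by (simp only: mult_ac)
    also have "\<dots> = real j * yy x ^ (j-1) * (yy x * (1/(1-x)))" by (simp only: yq)
    also have "\<dots> = (yy x ^ j * real j) * (1/(1-x))" unfolding pw by (simp only: mult_ac)
    finally have e: "x * (real j * yy x ^ (j-1) * (1/(1-x)^2)) = (yy x ^ j * real j) * (1/(1-x))" .
    have y0: "0 \<le> yy x ^ j" using yy_nonneg[of x] assms by simp
    have "2 * yy x ^ j \<le> real j * yy x ^ j" using j y0 by (intro mult_right_mono) auto
    also have "\<dots> = yy x ^ j * real j" by (rule mult.commute)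
    also have "\<dots> \<le> (yy x ^ j * real j) * (1/(1-x))"
      using assms yy_nonneg[of x] by (intro le_mul1) auto
    finally have "2 * yy x ^ j \<le> x * (real j * yy x ^ (j-1) * (1/(1-x)^2))" using e by simp
    then have "real (num_simple j) * (2 * yy x ^ j) \<le> real (num_simple j) * (x * (real j * yy x ^ (j-1) * (1/(1-x)^2)))"
      by (intro mult_left_mono) auto
    then show ?thesis by (simp only: mult_ac)
  qed
  have "2 * Lambda k x = 2 * (x^2/(1-x)) + (\<Sum>j=4..k. 2 * (real (num_simple j) * yy x ^ j))"
    by (simp add: Lambda_alt distrib_left sum_distrib_left)
  also have "\<dots> \<le> x * ((2*x - x^2)/(1-x)^2) + (\<Sum>j=4..k. x * (real (num_simple j) * (real j * yy x ^ (j-1) * (1/(1-x)^2))))"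
    by (intro add_mono t1 sum_mono t2)
  also have "\<dots> = x * L1 k x" by (simp add: L1_def distrib_left sum_distrib_left)
  finally show ?thesis .
qed

lemma Lambda_le_fact: assumes "0 \<le> x" "x < 1"
  shows "Lambda k x \<le> x^2/(1-x) + (\<Sum>j=4..k. fact j * yy x ^ j)"
  unfolding Lambda_alt
  using assms by (intro add_mono sum_mono mult_right_mono num_simple_le zero_le_power yy_nonneg) auto

lemma deriv_Lambda: "x < 1 \<Longrightarrow> deriv (Lambda k) x = L1 k x"
  by (rule DERIV_imp_deriv[OF d_Lambda])

lemma tau_props: assumes k: "k \<ge> 4" shows "0 < tau k \<and> tau k \<le> 1/2 \<and> L1 k (tau k) = 1"
proof -
  have cont: "continuous_on {0..1/2} (L1 k)"
    by (intro continuous_at_imp_continuous_on ballI DERIV_isCont[OF d_L1]) auto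
  obtain x0 where x0: "0 \<le> x0" "x0 \<le> 1/2" "L1 k x0 = 1"
    using IVT'[of "L1 k" 0 1 "1/2", OF _ _ _ cont] L1_zero[OF k] L1_half[of k] by auto
  have x0p: "0 < x0" using x0 L1_zero[OF k] by (cases "x0 = 0") auto
  have "tau k = x0" unfolding tau_def
  proof (rule the_equality)
    show "0 < x0 \<and> x0 < 1 \<and> deriv (Lambda k) x0 = 1" using x0 x0p deriv_Lambda[of x0 k] by auto
  next
    fix x assume x: "0 < x \<and> x < 1 \<and> deriv (Lambda k) x = 1"
    then have "L1 k x = 1" using deriv_Lambda[of x k] by auto
    show "x = x0"
    proof (rule ccontr)
      assume "x \<noteq> x0"
      then have "x < x0 \<or> x0 < x" by auto
      then show False using L1_strict[of x x0 k] L1_strict[of x0 x k] x x0 \<open>L1 k x = 1\<close> by auto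
    qed
  qed
  then show ?thesis using x0 x0p by simp
qed

lemma deriv2_Lambda: assumes k: "k \<ge> 4" shows "deriv (deriv (Lambda k)) (tau k) = L2 k (tau k)"
proof (rule DERIV_imp_deriv)
  have t: "tau k < 1" using tau_props[OF k] by simp
  show "(deriv (Lambda k) has_real_derivative L2 k (tau k)) (at (tau k))"
    by (rule has_field_derivative_transform_within_open[OF d_L1[OF t] open_lessThan[of 1]])
       (use t deriv_Lambda in auto)
qed

lemma rho_ge: assumes k: "k \<ge> 4" shows "rho k \<ge> tau k / 2"
proof -
  have t: "0 < tau k" "tau k \<le> 1/2" "L1 k (tau k) = 1" using tau_props[OF k] by auto
  have "2 * Lambda k (tau k) \<le> tau k * L1 k (tau k)" by (rule Lambda_le_xL1) (use t in auto)
  then show ?thesis using t by (simp add: rho_def)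
qed

lemma rho_max: assumes k: "k \<ge> 4" and x: "0 \<le> x" "x < 1" shows "x - Lambda k x \<le> rho k"
proof -
  have t: "0 < tau k" "tau k \<le> 1/2" "L1 k (tau k) = 1" using tau_props[OF k] by auto
  consider "x < tau k" | "x = tau k" | "x > tau k" by linarith
  then show ?thesis
  proof cases
    case 1
    obtain z where z: "x < z" "z < tau k" "Lambda k (tau k) - Lambda k x = (tau k - x) * L1 k z"
      using MVT2[OF 1, of "Lambda k" "L1 k"] d_Lambda t by force
    have "L1 k z \<le> 1" using L1_mono[of z "tau k" k] z x t by auto
    then have "(tau k - x) * L1 k z \<le> (tau k - x)" using 1 by (simp add: mult_left_le)
    then show ?thesis using z unfolding rho_def by linarith
  next
    case 2 then show ?thesis by (simp add: rho_def)
  next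
    case 3
    obtain z where z: "tau k < z" "z < x" "Lambda k x - Lambda k (tau k) = (x - tau k) * L1 k z"
      using MVT2[OF 3, of "Lambda k" "L1 k"] d_Lambda x by force
    have "L1 k z \<ge> 1" using L1_mono[of "tau k" z k] z x t by auto
    then have "(x - tau k) * L1 k z \<ge> (x - tau k)" using 3 by (simp add: mult_le_cancel_left1)
    then show ?thesis using z unfolding rho_def by linarith
  qed
qed

lemma E_bound: assumes k: "k \<ge> 4" and n: "n \<ge> 1"
  shows "E k n \<le> 4 / sqrt pi * rho k * (1 / rho k) ^ n * real n powr (-3/2)"
proof -
  have t: "0 < tau k" "tau k \<le> 1/2" "L1 k (tau k) = 1" using tau_props[OF k] by auto
  have r: "rho k \<ge> tau k / 2" by (rule rho_ge[OF k])
  have rp: "rho k > 0" using r t by linarith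
  have L2p: "L2 k (tau k) > 0" by (rule L2_pos) (use t in auto)
  have "1 \<le> tau k * L2 k (tau k)" using L1_le_xL2[of "tau k" k] t by auto
  then have L2ge: "1 / tau k \<le> L2 k (tau k)" using t by (simp add: field_simps)
  have "rho k / (2 * pi * L2 k (tau k)) \<le> rho k / (2 * pi * (1 / tau k))"
  proof (rule divide_left_mono)
    show "2 * pi * (1 / tau k) \<le> 2 * pi * L2 k (tau k)" using mult_left_mono[OF L2ge, of "2*pi"] by simp
    show "0 < 2 * pi * L2 k (tau k) * (2 * pi * (1 / tau k))" using L2p t by simp
  qed (use rp in auto)
  also have "\<dots> = rho k * tau k / (2 * pi)" by simp
  also have "\<dots> \<le> rho k * (2 * rho k) / (2 * pi)"
    using r rp by (intro divide_right_mono mult_left_mono) auto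
  also have "\<dots> = (rho k / sqrt pi)^2" by (simp add: power2_eq_square)
  finally have "gamma_k k \<le> sqrt ((rho k / sqrt pi)^2)"
    unfolding gamma_k_def deriv2_Lambda[OF k] by (rule real_sqrt_le_mono)
  also have "\<dots> = rho k / sqrt pi" using rp by simp
  finally have g: "gamma_k k \<le> rho k / sqrt pi" .
  have g0: "gamma_k k \<ge> 0" unfolding gamma_k_def deriv2_Lambda[OF k] using rp L2p by simp
  have "(1 - tau k)^2 \<ge> (1/2)^2" using t by (intro power_mono) auto
  then have tt: "1 / (1 - tau k)^2 \<le> 4" using t by (simp add: field_simps power2_eq_square)
  have pw: "rho k powr (- real n) = (1 / rho k) ^ n"
    using rp by (simp add: powr_minus powr_realpow power_one_over inverse_eq_divide)
  have "E k n = gamma_k k * (1 / (1 - tau k)^2) * (1 / rho k) ^ n * real n powr (-3/2)"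
    unfolding E_def pw by simp
  also have "\<dots> \<le> (rho k / sqrt pi) * 4 * (1 / rho k) ^ n * real n powr (-3/2)"
    using g g0 tt rp by (intro mult_right_mono mult_mono) auto
  finally show ?thesis by (simp add: mult.commute)
qed



lemma e_ge: "exp 1 \<ge> (5/2::real)"
proof -
  have "(9/8::real)^8 \<le> exp (1/8) ^ 8"
    by (intro power_mono) (use exp_ge_add_one_self[of "1/8::real"] in auto)
  also have "exp (1/8::real) ^ 8 = exp 1" by (simp flip: exp_of_nat_mult)
  moreover have "(5/2::real) \<le> (9/8)^8" by (simp add: power_divide eval_nat_numeral)
  ultimately show ?thesis by linarith
qed

lemma sum_geom_rev: assumes "0 \<le> q" "q < (1::real)" shows "(\<Sum>j=a..k. q^(k-j)) \<le> 1/(1-q)"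
proof (induction k)
  case 0 then show ?case using assms by (cases a) auto
next
  case (Suc k)
  show ?case
  proof (cases "a \<le> Suc k")
    case True
    have "(\<Sum>j=a..Suc k. q^(Suc k-j)) = q^0 + (\<Sum>j=a..k. q^(Suc k-j))"
      using True by (simp add: atLeastAtMostSuc_conv)
    also have "(\<Sum>j=a..k. q^(Suc k-j)) = q * (\<Sum>j=a..k. q^(k-j))"
      by (simp add: sum_distrib_left Suc_diff_le flip: power_Suc)
    also have "q * (\<Sum>j=a..k. q^(k-j)) \<le> q * (1/(1-q))" using Suc assms by (intro mult_left_mono) auto
    finally show ?thesis using assms by (simp add: field_simps)
  next
    case False then show ?thesis using assms by simp
  qed
qed

lemma top_ratio:
  assumes y: "y > 0" and r: "\<And>i. a < i \<Longrightarrow> i \<le> k \<Longrightarrow> real i * y \<ge> 11/10"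
  shows "m \<le> k - a \<Longrightarrow> fact (k-m) * y^(k-m) \<le> fact k * y^k * (10/11)^m"
proof (induction m)
  case 0 then show ?case by simp
next
  case (Suc m)
  define i where "i = k - m"
  have i: "a < i" "i \<le> k" "i > 0" using Suc.prems by (auto simp: i_def)
  have km: "k - Suc m = i - 1" by (simp add: i_def)
  have ri: "real i * y \<ge> 11/10" using r i by auto
  have f: "fact i * y^i = (fact (i-1) * y^(i-1)) * (real i * y)"
  proof -
    have "fact i = real i * fact (i-1)" using i by (simp add: fact_reduce)
    moreover have "y^i = y * y^(i-1)" using i by (cases i) auto
    ultimately show ?thesis by (simp add: mult_ac)
  qed
  have nn: "0 \<le> fact (i-1) * y^(i-1)" using y by simp
  have "fact (i-1) * y^(i-1) * (11/10) \<le> fact (i-1) * y^(i-1) * (real i * y)"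
    by (intro mult_left_mono ri nn)
  also have "\<dots> = fact i * y^i" using f by simp
  also have "\<dots> \<le> fact k * y^k * (10/11)^m" using Suc i by (simp add: i_def)
  finally have "fact (i-1) * y^(i-1) \<le> fact k * y^k * (10/11)^m * (10/11)" by simp
  then show ?case by (simp add: km mult_ac)
qed

lemma low_term:
  assumes k: "k \<ge> 4" and y: "0 \<le> y" "y \<le> exp 1 / real k" and j: "4 \<le> j" "2*j \<le> k"
  shows "fact j * y^j \<le> 3 * sqrt (real k) * ((10 * ln (real k) / real k)^4 + 1 / real k ^ 6)"
proof -
  have kp: "real k > 0" using k by simp
  define u where "u = real j / real k"
  have u: "0 \<le> u" "u \<le> 1/2" using j kp by (auto simp: u_def field_simps)
  have "fact j * y^j \<le> exp 1 * sqrt (real j) * (real j / exp 1)^j * y^j"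
    using fact_stirling[of j] j y by (intro mult_right_mono) auto
  also have "\<dots> = exp 1 * sqrt (real j) * (real j * y / exp 1)^j"
    by (simp add: power_mult_distrib power_divide)
  also have "\<dots> \<le> 3 * sqrt (real k) * u^j"
  proof (intro mult_mono power_mono)
    show "exp 1 \<le> (3::real)" by (rule exp_le)
    show "sqrt (real j) \<le> sqrt (real k)" using j by simp
    show "real j * y / exp 1 \<le> u"
    proof -
      have "real j * y \<le> real j * (exp 1 / real k)" using y by (intro mult_left_mono) auto
      then show ?thesis unfolding u_def by (simp add: field_simps)
    qed
  qed (use y u in auto)
  also have "u^j \<le> (10 * ln (real k) / real k)^4 + 1 / real k ^ 6"
  proof (cases "real j \<le> 10 * ln (real k)")
    case True
    have "u^j \<le> u^4" using j u by (intro power_decreasing) auto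
    also have "\<dots> \<le> (10 * ln (real k) / real k)^4"
      using True kp u by (intro power_mono) (auto simp: u_def divide_right_mono)
    finally show ?thesis by (simp add: add_increasing2)
  next
    case False
    have "u^j \<le> (1/2)^j" using u by (intro power_mono) auto
    also have "(1/2::real)^j = exp (- (real j * ln 2))"
    proof -
      have "exp (real j * ln 2) = (2::real)^j" by (simp add: exp_of_nat_mult)
      then show ?thesis by (simp add: exp_minus power_one_over inverse_eq_divide)
    qed
    also have "\<dots> \<le> exp (- (6 * ln (real k)))"
    proof -
      have l2: "ln (2::real) \<ge> 2/3" by (rule ln2_ge_two_thirds)
      have "real j * (2/3) \<le> real j * ln 2" using l2 by (intro mult_left_mono) auto
      moreover have "6 * ln (real k) \<le> real j * (2/3)" using False by simp
      ultimately show ?thesis by simp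
    qed
    also have "\<dots> = 1 / real k ^ 6"
    proof -
      have "exp (real (6::nat) * ln (real k)) = exp (ln (real k)) ^ 6" by (rule exp_of_nat_mult)
      then have "exp (6 * ln (real k)) = real k ^ 6" using kp by simp
      then show ?thesis by (simp add: exp_minus inverse_eq_divide)
    qed
    finally show ?thesis by (simp add: add_increasing)
  qed
  then have "3 * sqrt (real k) * u^j \<le> 3 * sqrt (real k) * ((10 * ln (real k) / real k)^4 + 1 / real k ^ 6)"
    by (intro mult_left_mono) auto
  finally show ?thesis .
qed


lemma sum_bound:
  assumes k: "k \<ge> 4" and d: "0 \<le> dl" "dl \<le> 1/8"
    and ydef: "y = exp 1 / (real k * (1 + dl))"
  shows "(\<Sum>j=4..k. fact j * y^j) \<le> real k * (3 * sqrt (real k) * ((10 * ln (real k) / real k)^4 + 1 / real k ^ 6))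
            + 33 * sqrt (real k) * (1 + dl) powr (- real k)"
proof -
  have kp: "real k > 0" using k by simp
  have yp: "y > 0" using kp d by (simp add: ydef)
  have yle: "y \<le> exp 1 / real k"
    unfolding ydef using kp d by (intro divide_left_mono) (auto intro!: mult_pos_pos)
  define K where "K = 3 * sqrt (real k) * ((10 * ln (real k) / real k)^4 + 1 / real k ^ 6)"
  have K0: "K \<ge> 0" unfolding K_def using kp by (intro mult_nonneg_nonneg add_nonneg_nonneg) auto
  define a where "a = k div 2"
  have sub: "{4..k} \<subseteq> {4..a} \<union> {Suc a..k}" by auto
  have "(\<Sum>j=4..k. fact j * y^j) \<le> (\<Sum>j\<in>{4..a} \<union> {Suc a..k}. fact j * y^j)"
    using yp by (intro sum_mono2 sub) auto
  also have "\<dots> = (\<Sum>j=4..a. fact j * y^j) + (\<Sum>j=Suc a..k. fact j * y^j)"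
    by (rule sum.union_disjoint) auto
  also have "(\<Sum>j=4..a. fact j * y^j) \<le> real k * K"
  proof -
    have "(\<Sum>j=4..a. fact j * y^j) \<le> of_nat (card {4..a}) * K"
      by (rule sum_bounded_above) (unfold K_def, rule low_term[OF k], use yp yle a_def in auto)
    also have "\<dots> \<le> real k * K" using K0 by (intro mult_right_mono) (auto simp: a_def)
    finally show ?thesis .
  qed
  also have "(\<Sum>j=Suc a..k. fact j * y^j) \<le> 33 * sqrt (real k) * (1 + dl) powr (- real k)"
  proof -
    have r: "real i * y \<ge> 11/10" if "a < i" "i \<le> k" for i
    proof -
      have "real k \<le> 2 * real i" using that by (simp add: a_def)
      then have "real k / 2 * y \<le> real i * y" using yp by (intro mult_right_mono) auto
      moreover have "real k / 2 * y = exp 1 / (2 * (1 + dl))" using kp by (simp add: ydef)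
      moreover have "exp 1 / (2 * (1 + dl)) \<ge> (5/2) / (2 * (9/8))"
        using e_ge d by (intro frac_le) auto
      ultimately show ?thesis by simp
    qed
    have t: "fact j * y^j \<le> fact k * y^k * (10/11)^(k-j)" if "j \<in> {Suc a..k}" for j
    proof -
      have "fact (k-(k-j)) * y^(k-(k-j)) \<le> fact k * y^k * (10/11)^(k-j)"
        by (rule top_ratio[of y a k]) (use yp r that in auto)
      then show ?thesis using that by simp
    qed
    have "(\<Sum>j=Suc a..k. fact j * y^j) \<le> (\<Sum>j=Suc a..k. fact k * y^k * (10/11)^(k-j))"
      by (intro sum_mono t)
    also have "\<dots> = fact k * y^k * (\<Sum>j=Suc a..k. (10/11)^(k-j))" by (simp add: sum_distrib_left)
    also have "\<dots> \<le> fact k * y^k * 11"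
      using sum_geom_rev[where q="10/11" and a="Suc a" and k=k] yp by (intro mult_left_mono) auto
    also have "fact k * y^k \<le> 3 * sqrt (real k) * (1 + dl) powr (- real k)"
    proof -
      have "fact k * y^k \<le> exp 1 * sqrt (real k) * (real k / exp 1)^k * y^k"
        using fact_stirling[of k] k yp by (intro mult_right_mono) auto
      also have "\<dots> = exp 1 * sqrt (real k) * (real k * y / exp 1)^k"
        by (simp add: power_mult_distrib power_divide)
      also have "real k * y / exp 1 = 1 / (1 + dl)"
      proof -
        have "real k * y = exp 1 / (1 + dl)" using kp by (simp add: ydef)
        then show ?thesis by simp
      qed
      also have "(1 / (1 + dl))^k = (1 + dl) powr (- real k)"
        using d by (simp add: powr_minus powr_realpow power_one_over inverse_eq_divide)
      also have "exp 1 * sqrt (real k) * (1 + dl) powr (- real k) \<le> 3 * sqrt (real k) * (1 + dl) powr (- real k)"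
        using exp_le by (intro mult_right_mono) auto
      finally show ?thesis .
    qed
    then have "fact k * y^k * 11 \<le> 3 * sqrt (real k) * (1 + dl) powr (- real k) * 11" by simp
    finally show ?thesis by simp
  qed
  finally show ?thesis unfolding K_def by simp
qed

lemma rho_lower:
  assumes k: "k \<ge> 4" and y: "y > 0"
  shows "rho k \<ge> y * (1 - y) / (1 + y) - (\<Sum>j=4..k. fact j * y^j)"
proof -
  define x where "x = y / (1 + y)"
  have x: "0 \<le> x" "x < 1" using y by (auto simp: x_def)
  have yyx: "yy x = y" using y by (simp add: yy_def x_def field_simps)
  have h1: "1 - x = 1/(1+y)" using y by (simp add: x_def field_simps)
  have cancel: "\<And>a b::real. b \<noteq> 0 \<Longrightarrow> a/(b*b)*b = a/b" by (simp add: field_simps)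
  have "x^2/(1-x) = x^2 * (1+y)" using h1 y by simp
  also have "\<dots> = y*y/((1+y)*(1+y)) * (1+y)" by (simp add: x_def power2_eq_square)
  also have "\<dots> = y*y/(1+y)" using y by (intro cancel) auto
  finally have h2: "x^2/(1-x) = y^2/(1+y)" by (simp add: power2_eq_square)
  have "x - x^2/(1-x) = y/(1+y) - y^2/(1+y)" by (subst h2) (simp add: x_def)
  also have "\<dots> = y * (1 - y) / (1 + y)" by (simp add: diff_divide_distrib power2_eq_square algebra_simps)
  finally have "x - x^2/(1-x) = y * (1 - y) / (1 + y)" .
  moreover have "Lambda k x \<le> x^2/(1-x) + (\<Sum>j=4..k. fact j * y^j)"
    using Lambda_le_fact[OF x, of k] by (simp add: yyx)
  moreover have "x - Lambda k x \<le> rho k" by (rule rho_max[OF k x])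
  ultimately show ?thesis by linarith
qed


lemma a1: "eventually (\<lambda>x::real. 5/2*ln x/x \<le> 1/8) at_top" by real_asymp
lemma a2: "eventually (\<lambda>x::real. x*(3* sqrt x*((10*ln x/x)^4 + 1/x^6)) \<le> 1/x^2) at_top" by real_asymp
lemma a3: "eventually (\<lambda>x::real. 33* sqrt x*(1+5/2*ln x/x) powr (-x) \<le> 40/x^2) at_top" by real_asymp
lemma a4: "eventually (\<lambda>x::real. 0 < (1/(x*(1+5/2*ln x/x)))*(1-3*(1/(x*(1+5/2*ln x/x))))/(1+3*(1/(x*(1+5/2*ln x/x)))) - 45/(2*x^2)) at_top" by real_asymp
lemma a5: "eventually (\<lambda>x::real. 1/((1/(x*(1+5/2*ln x/x)))*(1-3*(1/(x*(1+5/2*ln x/x))))/(1+3*(1/(x*(1+5/2*ln x/x)))) - 45/(2*x^2)) \<le> x*(1+5/2*ln x/x+40/x)) at_top" by real_asymp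
lemma a6: "eventually (\<lambda>x::real. 12/x \<le> sqrt(1/(8*x))) at_top" by real_asymp

lemma frac_cmp: assumes "0 \<le> z" "0 \<le> c" "c \<le> (3::real)" shows "(1-3*z)/(1+3*z) \<le> (1-c*z)/(1+c*z)"
proof -
  have "c*z \<le> 3*z" using assms by (intro mult_right_mono) auto
  then have "(1-3*z)*(1+c*z) \<le> (1-c*z)*(1+3*z)" by (simp add: algebra_simps)
  moreover have "c*z \<ge> 0" using assms by simp
  moreover have "1 + 3*z > 0" "1 + c*z > 0" using assms \<open>c*z \<ge> 0\<close> by linarith+
  ultimately show ?thesis by (simp add: divide_simps)
qed

definition Pk :: "real \<Rightarrow> bool" where
  "Pk x \<longleftrightarrow> x \<ge> 4 \<and> 5/2*ln x/x \<le> 1/8 \<and> x*(3* sqrt x*((10*ln x/x)^4 + 1/x^6)) \<le> 1/x^2 \<and>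
     33* sqrt x*(1+5/2*ln x/x) powr (-x) \<le> 40/x^2 \<and>
     0 < (1/(x*(1+5/2*ln x/x)))*(1-3*(1/(x*(1+5/2*ln x/x))))/(1+3*(1/(x*(1+5/2*ln x/x)))) - 45/(2*x^2) \<and>
     1/((1/(x*(1+5/2*ln x/x)))*(1-3*(1/(x*(1+5/2*ln x/x))))/(1+3*(1/(x*(1+5/2*ln x/x)))) - 45/(2*x^2)) \<le> x*(1+5/2*ln x/x+40/x) \<and>
     12/x \<le> sqrt(1/(8*x))"

lemma ev_Pk: "eventually (\<lambda>k. Pk (real k)) sequentially"
proof -
  have "eventually Pk at_top"
    unfolding Pk_def by (intro eventually_conj eventually_ge_at_top a1 a2 a3 a4 a5 a6)
  then show ?thesis by (rule eventually_compose_filterlim[OF _ filterlim_real_sequentially])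
qed

lemma main_k:
  assumes P: "Pk (real k)" and k: "k \<ge> 4" and n: "n \<ge> 1"
  shows "E k n \<le> 1 / (1 - exp 1 / real k)\<^sup>2 * sqrt (exp 1 / (4 * pi * real k))
              * (real k / exp 1) ^ n * (1 + 5/2 * ln (real k) / real k + 40 / real k) ^ n
              * real n powr (-3/2)"
proof -
  define x where "x = real k"
  have x4: "x \<ge> 4" using k by (simp add: x_def)
  define dl where "dl = 5/2 * ln x / x"
  define z where "z = 1 / (x * (1 + dl))"
  define y where "y = exp 1 / (x * (1 + dl))"
  define N where "N = z*(1-3*z)/(1+3*z) - 45/(2*x^2)"
  define A where "A = 1 / (1 - exp 1 / x)\<^sup>2 * sqrt (exp 1 / (4 * pi * x))"
  define B where "B = (x / exp 1) * (1 + dl + 40 / x)"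
  have Px: "dl \<le> 1/8" "x*(3* sqrt x*((10*ln x/x)^4 + 1/x^6)) \<le> 1/x^2"
     "33* sqrt x*(1+dl) powr (-x) \<le> 40/x^2" "0 < N" "1/N \<le> x*(1+dl+40/x)" "12/x \<le> sqrt(1/(8*x))"
    using P unfolding Pk_def x_def[symmetric] dl_def[symmetric] z_def[symmetric] N_def by auto
  have dl0: "dl \<ge> 0" using x4 by (simp add: dl_def)
  have xp: "x > 0" using x4 by simp
  have zp: "z > 0" using xp dl0 by (simp add: z_def)
  have yz: "y = exp 1 * z" by (simp add: y_def z_def)
  have yp: "y > 0" using zp yz by simp
  have zle: "z \<le> 1/x" unfolding z_def
  proof (rule divide_left_mono)
    show "x \<le> x * (1 + dl)" using xp dl0 by (intro le_mul1) auto
    show "0 < x * (1 + dl) * x" using xp dl0 by (intro mult_pos_pos) auto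
  qed simp
  have S: "(\<Sum>j=4..k. fact j * y^j) \<le> 41/x^2"
  proof -
    have "(\<Sum>j=4..k. fact j * y^j) \<le> real k * (3 * sqrt (real k) * ((10 * ln (real k) / real k)^4 + 1 / real k ^ 6))
            + 33 * sqrt (real k) * (1 + dl) powr (- real k)"
      by (rule sum_bound[OF k dl0 Px(1)]) (simp add: y_def x_def)
    also have "\<dots> \<le> 1/x^2 + 40/x^2" using Px(2,3) unfolding x_def by linarith
    finally show ?thesis by simp
  qed
  have S': "41/x^2 \<le> exp 1 * (45/(2*x^2))"
  proof -
    have "41/x^2 \<le> (5/2) * (45/(2*x^2))" using xp by (simp add: field_simps)
    also have "\<dots> \<le> exp 1 * (45/(2*x^2))" using e_ge xp by (intro mult_right_mono) auto
    finally show ?thesis .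
  qed
  have fr: "(1-3*z)/(1+3*z) \<le> (1-exp 1*z)/(1+exp 1*z)" using zp exp_le by (intro frac_cmp) auto
  have "rho k \<ge> y * (1 - y) / (1 + y) - (\<Sum>j=4..k. fact j * y^j)" by (rule rho_lower[OF k yp])
  moreover have "y * (1 - y) / (1 + y) \<ge> exp 1 * (z*(1-3*z)/(1+3*z))"
  proof -
    have "exp 1 * (z*(1-3*z)/(1+3*z)) = (exp 1 * z) * ((1-3*z)/(1+3*z))" by simp
    also have "\<dots> \<le> (exp 1 * z) * ((1-exp 1*z)/(1+exp 1*z))" using fr zp by (intro mult_left_mono) auto
    also have "\<dots> = y * (1 - y) / (1 + y)" by (simp add: yz)
    finally show ?thesis .
  qed
  ultimately have rho_ge: "rho k \<ge> exp 1 * N" using S S' unfolding N_def by (simp add: right_diff_distrib)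
  define M where "M = exp 1 * N"
  have Mp: "M > 0" using Px(4) by (simp add: M_def)
  have rp: "rho k > 0" using rho_ge Mp M_def by linarith
  have MA: "4 / sqrt pi * M \<le> A"
  proof -
    have Nz: "N \<le> z" unfolding N_def
    proof -
      have "(1-3*z)/(1+3*z) \<le> 1" using zp by simp
      then have "z*((1-3*z)/(1+3*z)) \<le> z" using zp by (intro mult_left_le) auto
      then have h2: "z*(1-3*z)/(1+3*z) \<le> z" by simp
      have h: "0 \<le> 45/(2*x^2)" by simp
      from h2 h show "z*(1-3*z)/(1+3*z) - 45/(2*x^2) \<le> z" by linarith
    qed
    have "M \<le> 3 * (1/x)" unfolding M_def using Nz zle Px(4) exp_le by (intro mult_mono) auto
    moreover have "4 / sqrt pi \<le> 4" using pi_gt3 by (simp add: divide_simps)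
    ultimately have "4 / sqrt pi * M \<le> 4 * (3 * (1/x))" using Mp by (intro mult_mono) auto
    also have "\<dots> = 12/x" by simp
    also have "\<dots> \<le> sqrt(1/(8*x))" by (rule Px(6))
    also have "\<dots> \<le> sqrt (exp 1 / (4 * pi * x))"
    proof -
      have "1/(8*x) \<le> exp 1 / (4 * pi * x)"
        using xp e_ge pi_less_4 by (simp add: divide_simps)
      then show ?thesis by simp
    qed
    also have "\<dots> \<le> A" unfolding A_def
    proof -
      have "exp 1 / x > 0" "exp 1 / x < 1" using xp x4 exp_le by (auto simp: divide_simps)
      then have "(1 - exp 1 / x)^2 \<le> 1" "(1 - exp 1 / x)^2 > 0" by (auto intro!: power_le_one)
      then have c1: "1 \<le> 1 / (1 - exp 1 / x)\<^sup>2" by simp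
      show "sqrt (exp 1 / (4 * pi * x)) \<le> 1 / (1 - exp 1 / x)\<^sup>2 * sqrt (exp 1 / (4 * pi * x))"
        using mult_right_mono[OF c1, of "sqrt (exp 1 / (4 * pi * x))"] xp by simp
    qed
    finally show ?thesis .
  qed
  have MB: "1 / M \<le> B"
  proof -
    have "1 / M = (1 / N) / exp 1" by (simp add: M_def)
    also have "\<dots> \<le> (x*(1+dl+40/x)) / exp 1" using Px(5) by (intro divide_right_mono) auto
    also have "\<dots> = B" by (simp add: B_def)
    finally show ?thesis .
  qed
  have "rho k * (1 / rho k) ^ n = (1 / rho k) ^ (n-1)"
    using rp n by (cases n) (auto simp: field_simps)
  also have "(1 / rho k) ^ (n-1) \<le> (1 / M) ^ (n-1)"
    using rho_ge rp Mp by (intro power_mono divide_left_mono) (auto simp: M_def)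
  also have "(1 / M) ^ (n-1) = M * (1 / M) ^ n"
    using Mp n by (cases n) (auto simp: field_simps)
  finally have r1: "rho k * (1 / rho k) ^ n \<le> M * (1 / M) ^ n" .
  have E0: "E k n \<le> 4 / sqrt pi * (rho k * (1 / rho k) ^ n) * real n powr (-3/2)"
    using E_bound[OF k n] by (simp add: mult.assoc)
  also have "\<dots> \<le> 4 / sqrt pi * (M * (1 / M) ^ n) * real n powr (-3/2)"
    by (intro mult_right_mono mult_left_mono r1) auto
  also have "\<dots> = (4 / sqrt pi * M) * (1 / M) ^ n * real n powr (-3/2)" by simp
  also have "\<dots> \<le> A * B ^ n * real n powr (-3/2)"
  proof -
    have "0 \<le> 4 / sqrt pi * M" using Mp by simp
    then have A0: "0 \<le> A" using MA by linarith
    show ?thesis using MA MB Mp A0 by (intro mult_right_mono mult_mono power_mono) auto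
  qed
  also have "\<dots> = 1 / (1 - exp 1 / real k)\<^sup>2 * sqrt (exp 1 / (4 * pi * real k))
              * (real k / exp 1) ^ n * (1 + 5/2 * ln (real k) / real k + 40 / real k) ^ n
              * real n powr (-3/2)"
  proof -
    have Bn: "B^n = (x / exp 1)^n * (1 + dl + 40 / x)^n" unfolding B_def by (rule power_mult_distrib)
    show ?thesis unfolding Bn A_def by (simp only: mult.assoc x_def dl_def)
  qed
  finally show ?thesis .
qed

theorem mainTheorem13:
  shows "\<exists>C::real. C > 0 \<and> (\<exists>K::nat. \<forall>k \<ge> K. \<forall>n \<ge> 1. k \<ge> 4 \<longrightarrow>
     E k n \<le> 1 / (1 - exp 1 / real k)\<^sup>2 * sqrt (exp 1 / (4 * pi * real k))
              * (real k / exp 1) ^ n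
              * (1 + 5/2 * ln (real k) / real k + C / real k) ^ n
              * real n powr (-3/2))"
proof -
  obtain K where K: "\<And>k. k \<ge> K \<Longrightarrow> Pk (real k)"
    using ev_Pk unfolding eventually_sequentially by blast
  show ?thesis
    by (rule exI[of _ 40]) (use K main_k in auto)
qed


end
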